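(* Let $\mathcal{G}$, $u$, $v$ be as in the context (finite bicoloured graph with both a pure green and a pure red path from $u$ to $v$, and with fixed weights). Then for every $r$ with $0\le r<r_{tot}$ there exists a red edge $e$ of $\mathcal{G}$ with $\Delta(r)=\Delta_e(r)$.
   Context: $\mathcal{G}=\langle V,E,\omega,\lambda\rangle$ is a finite weighted coloured--edge graph (directed multigraph, weights $\omega:E\to\mathbb{R}^+$, colours $\lambda:E\to M$) with $M=\{\text{red},\text{green}\}$. A path from $u$ to $v$ is a sequence of consecutive edges from $u$ to $v$ visiting no vertex twice; $\omega_{\text{red}}(p)$, $\omega_{\text{green}}(p)$ denote the sums of weights of the red, resp. green, edges of $p$. A path $p$ from $u$ to $v$ is minimal if there is no path $q$ from $u$ to $v$ with $\omega_{\text{red}}(q)\le\omega_{\text{red}}(p)$, $\omega_{\text{green}}(q)\le\omega_{\text{green}}(p)$ and at least one of these inequalities strict. It is assumed there is a path from $u$ to $v$ all of whose edges are green and a path from $u$ to $v$ all of whose edges are red; $r_{tot}$ is the least red weight of a path from $u$ to $v$ all of whose edges are red. For a red edge $e$ and $r\ge0$: $g_r$ is the least value of $\omega_{\text{green}}(p)$ over all paths $p$ from $u$ to $v$ not containing $e$ with $\omega_{\text{red}}(p)\le r$; $\Delta_e(r)$ is the least value of $\omega_{\text{red}}(q)$ over all paths $q$ from $u$ to $v$ containing $e$ with $\omega_{\text{green}}(q)<g_r$, or $\infty$ if no such path exists. For $0\le r<r_{tot}$, $\Delta(r)$ is the least value of $\omega_{\text{red}}(q)$ over all minimal paths $q$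 from $u$ to $v$ with $\omega_{\text{red}}(q)>r$ (so $\Delta(r)>r$). *)

theory Defs
  imports "HOL-Library.Extended_Real"
begin

datatype colour = Red | Green

definition wf_graph ::
  "'v set \<Rightarrow> 'e set \<Rightarrow> ('e \<Rightarrow> 'v) \<Rightarrow> ('e \<Rightarrow> 'v) \<Rightarrow> ('e \<Rightarrow> real) \<Rightarrow> bool" where
  "wf_graph V E src tgt w \<longleftrightarrow> finite V \<and> finite E \<and>
     (\<forall>e\<in>E. src e \<in> V \<and> tgt e \<in> V) \<and> (\<forall>e\<in>E. w e > 0)"

definition is_path ::
  "'e set \<Rightarrow> ('e \<Rightarrow> 'v) \<Rightarrow> ('e \<Rightarrow> 'v) \<Rightarrow> 'v \<Rightarrow> 'v \<Rightarrow> 'e list \<Rightarrow> bool" where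
  "is_path E src tgt a b p \<longleftrightarrow>
     set p \<subseteq> E \<and>
     (if p = [] then a = b
      else src (hd p) = a \<and> tgt (last p) = b \<and>
           (\<forall>i. Suc i < length p \<longrightarrow> tgt (p ! i) = src (p ! Suc i))) \<and>
     distinct (a # map tgt p)"

definition wcol :: "('e \<Rightarrow> real) \<Rightarrow> ('e \<Rightarrow> colour) \<Rightarrow> colour \<Rightarrow> 'e list \<Rightarrow> real" where
  "wcol w col c p = (\<Sum>e\<leftarrow>p. if col e = c then w e else 0)"

abbreviation wred where "wred w col p \<equiv> wcol w col Red p"
abbreviation wgreen where "wgreen w col p \<equiv> wcol w col Green p"

definition minimal_path ::
  "'e set \<Rightarrow> ('e \<Rightarrow> 'v) \<Rightarrow> ('e \<Rightarrow> 'v) \<Rightarrow> ('e \<Rightarrow> real) \<Rightarrow> ('e \<Rightarrow> colour) \<Rightarrow> 'v \<Rightarrow> 'v \<Rightarrow> 'e list \<Rightarrow> bool" where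
  "minimal_path E src tgt w col a b p \<longleftrightarrow> is_path E src tgt a b p \<and>
     \<not> (\<exists>q. is_path E src tgt a b q \<and> wred w col q \<le> wred w col p \<and> wgreen w col q \<le> wgreen w col p \<and>
            (wred w col q < wred w col p \<or> wgreen w col q < wgreen w col p))"

definition r_tot ::
  "'e set \<Rightarrow> ('e \<Rightarrow> 'v) \<Rightarrow> ('e \<Rightarrow> 'v) \<Rightarrow> ('e \<Rightarrow> real) \<Rightarrow> ('e \<Rightarrow> colour) \<Rightarrow> 'v \<Rightarrow> 'v \<Rightarrow> real" where
  "r_tot E src tgt w col a b =
     Inf {wred w col p | p. is_path E src tgt a b p \<and> (\<forall>e\<in>set p. col e = Red)}"

definition g_r ::
  "'e set \<Rightarrow> ('e \<Rightarrow> 'v) \<Rightarrow> ('e \<Rightarrow> 'v) \<Rightarrow> ('e \<Rightarrow> real) \<Rightarrow> ('e \<Rightarrow> colour) \<Rightarrow> 'v \<Rightarrow> 'v \<Rightarrow> 'e \<Rightarrow> real \<Rightarrow> real" where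
  "g_r E src tgt w col a b e r =
     Inf {wgreen w col p | p. is_path E src tgt a b p \<and> e \<notin> set p \<and> wred w col p \<le> r}"

text \<open>\<Delta>_e(r), with value \<infinity> (Inf of the empty set of extended reals) if no such path exists.\<close>
definition Delta_e ::
  "'e set \<Rightarrow> ('e \<Rightarrow> 'v) \<Rightarrow> ('e \<Rightarrow> 'v) \<Rightarrow> ('e \<Rightarrow> real) \<Rightarrow> ('e \<Rightarrow> colour) \<Rightarrow> 'v \<Rightarrow> 'v \<Rightarrow> 'e \<Rightarrow> real \<Rightarrow> ereal" where
  "Delta_e E src tgt w col a b e r =
     Inf {ereal (wred w col q) | q. is_path E src tgt a b q \<and> e \<in> set q \<and>
            wgreen w col q < g_r E src tgt w col a b e r}"

definition Delta ::
  "'e set \<Rightarrow> ('e \<Rightarrow> 'v) \<Rightarrow> ('e \<Rightarrow> 'v) \<Rightarrow> ('e \<Rightarrow> real) \<Rightarrow> ('e \<Rightarrow> colour) \<Rightarrow> 'v \<Rightarrow> 'v \<Rightarrow> real \<Rightarrow> ereal" where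
  "Delta E src tgt w col a b r =
     Inf {ereal (wred w col q) | q. minimal_path E src tgt w col a b q \<and> wred w col q > r}"

end

theory Submission
  imports Defs
begin

lemma path_distinct: "is_path E src tgt a b p \<Longrightarrow> distinct p"
  unfolding is_path_def by (simp add: distinct_map)

lemma finite_paths:
  assumes "finite E"
  shows "finite {p. is_path E src tgt a b p}"
proof (rule finite_subset[OF _ finite_lists_length_le[OF assms, of "card E"]])
  show "{p. is_path E src tgt a b p} \<subseteq> {xs. set xs \<subseteq> E \<and> length xs \<le> card E}"
  proof clarify
    fix p assume p: "is_path E src tgt a b p"
    then have d: "distinct p" and s: "set p \<subseteq> E" using path_distinct is_path_def by fastforce+
    have "length p = card (set p)" using d by (simp add: distinct_card)
    also have "\<dots> \<le> card E" using s assms by (rule card_mono[rotated])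
    finally show "set p \<subseteq> E \<and> length p \<le> card E" using s by simp
  qed
qed

lemma wcol_nonneg: "(\<forall>e\<in>set p. w e > 0) \<Longrightarrow> 0 \<le> wcol w col c p"
  unfolding wcol_def by (induction p) auto

lemma wcol_zero_all: "(\<forall>e\<in>set p. w e > 0) \<Longrightarrow> wcol w col c p \<le> 0 \<Longrightarrow> \<forall>e\<in>set p. col e \<noteq> c"
proof (induction p)
  case Nil then show ?case by simp
next
  case (Cons a p)
  have "0 \<le> wcol w col c p" using Cons.prems by (intro wcol_nonneg) auto
  moreover have "wcol w col c (a # p) = (if col a = c then w a else 0) + wcol w col c p"
    unfolding wcol_def by simp
  ultimately show ?case using Cons by (auto split: if_splits)
qed

lemma wcol_other: "(\<forall>e\<in>set p. col e = d) \<Longrightarrow> d \<noteq> c \<Longrightarrow> wcol w col c p = 0"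
  unfolding wcol_def by (induction p) auto

lemma wcol_set: "distinct p \<Longrightarrow> wcol w col c p = (\<Sum>e\<in>set p. if col e = c then w e else 0)"
  unfolding wcol_def by (simp add: sum_list_distinct_conv_sum_set)

lemma min_exists:
  fixes f :: "'a \<Rightarrow> real"
  assumes "finite S" "S \<noteq> {}"
  shows "\<exists>x\<in>S. \<forall>y\<in>S. f x \<le> f y"
proof -
  have "Min (f ` S) \<in> f ` S" using Min_in[of "f ` S"] assms by auto
  then obtain x where "x \<in> S" "f x = Min (f ` S)" by auto
  then show ?thesis using assms by (metis Min_le finite_imageI image_eqI)
qed

theorem lemma5:
  fixes V :: "'v set" and E :: "'e set" and src tgt :: "'e \<Rightarrow> 'v"
    and w :: "'e \<Rightarrow> real" and col :: "'e \<Rightarrow> colour" and u v :: 'v and r :: real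
  assumes "wf_graph V E src tgt w"
    and "u \<in> V" and "v \<in> V"
    and "\<exists>p. is_path E src tgt u v p \<and> (\<forall>e\<in>set p. col e = Green)"
    and "\<exists>p. is_path E src tgt u v p \<and> (\<forall>e\<in>set p. col e = Red)"
    and "0 \<le> r" and "r < r_tot E src tgt w col u v"
  shows "\<exists>e\<in>E. col e = Red \<and> Delta E src tgt w col u v r = Delta_e E src tgt w col u v e r"
proof -
  let ?path = "is_path E src tgt u v"
  let ?R = "wred w col" and ?G = "wgreen w col"
  let ?min = "minimal_path E src tgt w col u v"
  have fE: "finite E" and wpos: "\<And>e. e \<in> E \<Longrightarrow> w e > 0" using assms(1) unfolding wf_graph_def by auto
  have sE: "\<And>p. ?path p \<Longrightarrow> set p \<subseteq> E" unfolding is_path_def by auto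
  have pos: "\<And>p. ?path p \<Longrightarrow> \<forall>e\<in>set p. w e > 0" using sE wpos by blast
  have fP: "finite {p. ?path p}" using finite_paths[OF fE] .
  have dom: "\<exists>m. ?min m \<and> ?R m \<le> ?R p \<and> ?G m \<le> ?G p" if pp: "?path p" for p
  proof -
    let ?S = "{q. ?path q \<and> ?R q \<le> ?R p \<and> ?G q \<le> ?G p}"
    have "finite ?S" by (rule finite_subset[OF _ fP]) auto
    moreover have "?S \<noteq> {}" using pp by auto
    ultimately obtain m where m: "m \<in> ?S" and mm: "\<forall>y\<in>?S. ?R m + ?G m \<le> ?R y + ?G y"
      using min_exists[of ?S "\<lambda>q. ?R q + ?G q"] by blast
    have "?min m"
      unfolding minimal_path_def
    proof (intro conjI notI)
      show "?path m" using m by auto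
    next
      assume "\<exists>q. ?path q \<and> ?R q \<le> ?R m \<and> ?G q \<le> ?G m \<and> (?R q < ?R m \<or> ?G q < ?G m)"
      then obtain q where q: "?path q" "?R q \<le> ?R m" "?G q \<le> ?G m" "?R q < ?R m \<or> ?G q < ?G m" by blast
      then have "q \<in> ?S" using m by auto
      with mm have "?R m + ?G m \<le> ?R q + ?G q" by blast
      with q show False by linarith
    qed
    then show ?thesis using m by auto
  qed
  obtain p0 where p0: "?path p0" "\<forall>e\<in>set p0. col e = Red" using assms(5) by blast
  obtain m0 where m0: "?min m0" "?R m0 \<le> ?R p0" "?G m0 \<le> ?G p0" using dom[OF p0(1)] by blast
  have m0p: "?path m0" using m0 unfolding minimal_path_def by auto
  have "?G p0 = 0" using wcol_other[OF p0(2)] by simp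
  then have "\<forall>e\<in>set m0. col e \<noteq> Green" using wcol_zero_all[OF pos[OF m0p]] m0 by simp
  then have m0red: "\<forall>e\<in>set m0. col e = Red" by (metis colour.exhaust)
  have "r_tot E src tgt w col u v \<le> ?R m0"
    unfolding r_tot_def
    by (rule cInf_lower) (use m0p m0red in \<open>auto intro!: bdd_belowI[where m=0] wcol_nonneg dest: pos\<close>)
  then have m0r: "?R m0 > r" using assms(7) by simp
  let ?Q = "{q. ?min q \<and> ?R q > r}"
  have "finite ?Q" by (rule finite_subset[OF _ fP]) (auto simp: minimal_path_def)
  moreover have "?Q \<noteq> {}" using m0 m0r by auto
  ultimately obtain q where q: "q \<in> ?Q" and qm: "\<forall>y\<in>?Q. ?R q \<le> ?R y"
    using min_exists[of ?Q ?R] by blast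
  have qp: "?path q" using q unfolding minimal_path_def by auto
  have Delta_eq: "Delta E src tgt w col u v r = ereal (?R q)"
    unfolding Delta_def
    by (rule antisym; (rule Inf_lower Inf_greatest)?) (use q qm in auto)
  obtain pg where pg: "?path pg" "\<forall>e\<in>set pg. col e = Green" using assms(4) by blast
  let ?S1 = "{p. ?path p \<and> ?R p \<le> r}"
  have "finite ?S1" by (rule finite_subset[OF _ fP]) auto
  moreover have "pg \<in> ?S1" using pg wcol_other[OF pg(2)] assms(6) by auto
  ultimately obtain p1 where p1: "p1 \<in> ?S1" and p1m: "\<forall>y\<in>?S1. ?G p1 \<le> ?G y"
    using min_exists[of ?S1 ?G] by blast
  have p1p: "?path p1" and p1r: "?R p1 \<le> r" using p1 by auto
  have qg: "?G q < ?G p1"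
  proof (rule ccontr)
    assume "\<not> ?G q < ?G p1"
    then have "?G p1 \<le> ?G q" by simp
    moreover have "?R p1 < ?R q" using p1r q by auto
    ultimately show False using q p1p unfolding minimal_path_def by auto
  qed
  have "\<exists>e\<in>set q. col e = Red \<and> e \<notin> set p1"
  proof (rule ccontr)
    assume "\<not> ?thesis"
    then have sub: "{e\<in>set q. col e = Red} \<subseteq> set p1" by auto
    let ?f = "\<lambda>e. if col e = Red then w e else 0"
    have "?R q = sum ?f (set q)" using wcol_set[OF path_distinct[OF qp]] by simp
    also have "\<dots> = sum ?f {e\<in>set q. col e = Red}"
      by (rule sum.mono_neutral_right) auto
    also have "\<dots> \<le> sum ?f (set p1)"
      by (rule sum_mono2[OF _ sub]) (use pos[OF p1p] in auto)
    also have "\<dots> = ?R p1" using wcol_set[OF path_distinct[OF p1p]] by simp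
    finally show False using p1r q by auto
  qed
  then obtain e where e: "e \<in> set q" "col e = Red" "e \<notin> set p1" by blast
  have eE: "e \<in> E" using e sE[OF qp] by auto
  have g_eq: "g_r E src tgt w col u v e r = ?G p1"
    unfolding g_r_def
    by (rule cInf_eq_minimum) (use p1 p1m e in auto)
  have Delta_e_eq: "Delta_e E src tgt w col u v e r = ereal (?R q)"
    unfolding Delta_e_def g_eq
  proof (rule antisym)
    show "Inf {ereal (?R q') |q'. ?path q' \<and> e \<in> set q' \<and> ?G q' < ?G p1} \<le> ereal (?R q)"
      by (rule Inf_lower) (use qp e qg in auto)
  next
    show "ereal (?R q) \<le> Inf {ereal (?R q') |q'. ?path q' \<and> e \<in> set q' \<and> ?G q' < ?G p1}"
    proof (rule Inf_greatest, clarify)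
      fix q' assume q': "?path q'" "e \<in> set q'" "?G q' < ?G p1"
      obtain m where m: "?min m" "?R m \<le> ?R q'" "?G m \<le> ?G q'" using dom[OF q'(1)] by blast
      have mp: "?path m" using m unfolding minimal_path_def by auto
      have "?R m > r"
      proof (rule ccontr)
        assume "\<not> ?R m > r"
        then have "m \<in> ?S1" using mp by auto
        then have "?G p1 \<le> ?G m" using p1m by blast
        then show False using m q' by linarith
      qed
      then have "m \<in> ?Q" using m by auto
      then have "?R q \<le> ?R m" using qm by blast
      then show "ereal (?R q) \<le> ereal (?R q')" using m by simp
    qed
  qed
  show ?thesis using eE e Delta_eq Delta_e_eq by auto
qed

end
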